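(* Let $G=(V,w,m)$ be a locally finite connected weighted graph which is weakly spherically symmetric with respect to $x_0\in V$, and suppose $G$ satisfies $CD(K,n)$ for some $K\in\mathbb R$, $n\in(0,\infty]$. Then $G_P^{x_0}$ satisfies $CD(K,n)$.
   Context: A weighted graph is $G=(V,w,m)$ with $V$ countable, $w:V\times V\to[0,\infty)$ symmetric with $w(x,x)=0$, $m:V\to(0,\infty)$; $x\sim y$ iff $w(x,y)>0$. Laplacian $\Delta f(x)=\frac1{m(x)}\sum_yw(x,y)(f(y)-f(x))$. $2\Gamma(f,g)=\Delta(fg)-f\Delta g-g\Delta f$, $2\Gamma_2(f,g)=\Delta\Gamma(f,g)-\Gamma(f,\Delta g)-\Gamma(g,\Delta f)$, $\Gamma f=\Gamma(f,f)$, $\Gamma_2f=\Gamma_2(f,f)$; $CD(K,n)$ means $\Gamma_2f(x)\ge\frac1n(\Delta f(x))^2+K\Gamma f(x)$ for all $f$ and all vertices $x$ (with $\frac1\infty=0$). $d$ is the combinatorial distance, $S_i(x_0)=\{y:d(x_0,y)=i\}$; $m(A)=\sum_{x\in A}m(x)$, $w(A,B)=\sum_{(x,y)\in A\times B}w(x,y)$. $d_\mp^{x_0}(z)=\sum_{y\sim z,\ d(y,x_0)\lessgtr d(z,x_0)}\frac{w(y,z)}{m(z)}$. $G$ is weakly spherically symmetric w.r.t. $x_0$ if for all $y,z$ with $d(y,x_0)=d(z,x_0)$: $m(y)=m(z)$, $d_-^{x_0}(y)=d_-^{x_0}(z)$, $d_+^{x_0}(y)=d_+^{x_0}(z)$.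 $G_P^{x_0}=(V_G^{x_0},w_G^{x_0},m_G^{x_0})$ has vertex set $V_G^{x_0}=\{i\in\mathbb N_0:i\le\sup_yd(x_0,y)\}$, $w_G^{x_0}(i,j)=w(S_i(x_0),S_j(x_0))$ if $|i-j|=1$ and $0$ otherwise, $m_G^{x_0}(i)=m(S_i(x_0))$. *)

theory Defs
  imports Complex_Main "HOL-Library.Countable_Set" "HOL-Library.Extended_Real"
begin

definition weighted_graph :: "'a set \<Rightarrow> ('a \<Rightarrow> 'a \<Rightarrow> real) \<Rightarrow> ('a \<Rightarrow> real) \<Rightarrow> bool" where
  "weighted_graph V w m \<longleftrightarrow> countable V
     \<and> (\<forall>x y. 0 \<le> w x y) \<and> (\<forall>x y. w x y = w y x) \<and> (\<forall>x. w x x = 0)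
     \<and> (\<forall>x y. 0 < w x y \<longrightarrow> x \<in> V \<and> y \<in> V)
     \<and> (\<forall>x\<in>V. 0 < m x)"

definition adj :: "('a \<Rightarrow> 'a \<Rightarrow> real) \<Rightarrow> ('a \<times> 'a) set" where
  "adj w = {(x, y). 0 < w x y}"

definition nbrs :: "'a set \<Rightarrow> ('a \<Rightarrow> 'a \<Rightarrow> real) \<Rightarrow> 'a \<Rightarrow> 'a set" where
  "nbrs V w x = {y \<in> V. 0 < w x y}"

definition locally_finite :: "'a set \<Rightarrow> ('a \<Rightarrow> 'a \<Rightarrow> real) \<Rightarrow> bool" where
  "locally_finite V w \<longleftrightarrow> (\<forall>x\<in>V. finite (nbrs V w x))"

definition connected_graph :: "'a set \<Rightarrow> ('a \<Rightarrow> 'a \<Rightarrow> real) \<Rightarrow> bool" where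
  "connected_graph V w \<longleftrightarrow> (\<forall>x\<in>V. \<forall>y\<in>V. (x, y) \<in> (adj w)\<^sup>*)"

definition laplacian :: "'a set \<Rightarrow> ('a \<Rightarrow> 'a \<Rightarrow> real) \<Rightarrow> ('a \<Rightarrow> real) \<Rightarrow> ('a \<Rightarrow> real) \<Rightarrow> 'a \<Rightarrow> real" where
  "laplacian V w m f x = (\<Sum>y\<in>nbrs V w x. w x y * (f y - f x)) / m x"

definition Gam :: "'a set \<Rightarrow> ('a \<Rightarrow> 'a \<Rightarrow> real) \<Rightarrow> ('a \<Rightarrow> real) \<Rightarrow> ('a \<Rightarrow> real) \<Rightarrow> ('a \<Rightarrow> real) \<Rightarrow> 'a \<Rightarrow> real" where
  "Gam V w m f g x = (laplacian V w m (\<lambda>z. f z * g z) x - f x * laplacian V w m g x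
                        - g x * laplacian V w m f x) / 2"

definition Gam2 :: "'a set \<Rightarrow> ('a \<Rightarrow> 'a \<Rightarrow> real) \<Rightarrow> ('a \<Rightarrow> real) \<Rightarrow> ('a \<Rightarrow> real) \<Rightarrow> ('a \<Rightarrow> real) \<Rightarrow> 'a \<Rightarrow> real" where
  "Gam2 V w m f g x = (laplacian V w m (Gam V w m f g) x
                         - Gam V w m f (laplacian V w m g) x
                         - Gam V w m g (laplacian V w m f) x) / 2"

definition inv_dim :: "ereal \<Rightarrow> real" where
  "inv_dim n = (if n = \<infinity> then 0 else 1 / real_of_ereal n)"

definition CD :: "'a set \<Rightarrow> ('a \<Rightarrow> 'a \<Rightarrow> real) \<Rightarrow> ('a \<Rightarrow> real) \<Rightarrow> real \<Rightarrow> ereal \<Rightarrow> bool" where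
  "CD V w m K n \<longleftrightarrow> (\<forall>f x. x \<in> V \<longrightarrow>
      Gam2 V w m f f x \<ge> inv_dim n * (laplacian V w m f x)\<^sup>2 + K * Gam V w m f f x)"

definition gdist :: "('a \<Rightarrow> 'a \<Rightarrow> real) \<Rightarrow> 'a \<Rightarrow> 'a \<Rightarrow> nat" where
  "gdist w x y = (LEAST k. (x, y) \<in> adj w ^^ k)"

definition sphere_g :: "'a set \<Rightarrow> ('a \<Rightarrow> 'a \<Rightarrow> real) \<Rightarrow> 'a \<Rightarrow> nat \<Rightarrow> 'a set" where
  "sphere_g V w x0 i = {y \<in> V. gdist w x0 y = i}"

definition d_minus :: "'a set \<Rightarrow> ('a \<Rightarrow> 'a \<Rightarrow> real) \<Rightarrow> ('a \<Rightarrow> real) \<Rightarrow> 'a \<Rightarrow> 'a \<Rightarrow> real" where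
  "d_minus V w m x0 z = (\<Sum>y\<in>{y\<in>nbrs V w z. gdist w x0 y < gdist w x0 z}. w y z / m z)"

definition d_plus :: "'a set \<Rightarrow> ('a \<Rightarrow> 'a \<Rightarrow> real) \<Rightarrow> ('a \<Rightarrow> real) \<Rightarrow> 'a \<Rightarrow> 'a \<Rightarrow> real" where
  "d_plus V w m x0 z = (\<Sum>y\<in>{y\<in>nbrs V w z. gdist w x0 y > gdist w x0 z}. w y z / m z)"

definition weakly_sph_sym :: "'a set \<Rightarrow> ('a \<Rightarrow> 'a \<Rightarrow> real) \<Rightarrow> ('a \<Rightarrow> real) \<Rightarrow> 'a \<Rightarrow> bool" where
  "weakly_sph_sym V w m x0 \<longleftrightarrow> (\<forall>y\<in>V. \<forall>z\<in>V. gdist w x0 y = gdist w x0 z \<longrightarrow>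
      m y = m z \<and> d_minus V w m x0 y = d_minus V w m x0 z \<and> d_plus V w m x0 y = d_plus V w m x0 z)"

text \<open>The quotient (path) graph G_P^{x0}. Vertex set {i. i \<le> sup_y d(x0,y)}.\<close>
definition VP :: "'a set \<Rightarrow> ('a \<Rightarrow> 'a \<Rightarrow> real) \<Rightarrow> 'a \<Rightarrow> nat set" where
  "VP V w x0 = {i. \<exists>y\<in>V. i \<le> gdist w x0 y}"

definition wP :: "'a set \<Rightarrow> ('a \<Rightarrow> 'a \<Rightarrow> real) \<Rightarrow> 'a \<Rightarrow> nat \<Rightarrow> nat \<Rightarrow> real" where
  "wP V w x0 i j = (if i = j + 1 \<or> j = i + 1
      then (\<Sum>p\<in>sphere_g V w x0 i \<times> sphere_g V w x0 j. w (fst p) (snd p)) else 0)"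

definition mP :: "'a set \<Rightarrow> ('a \<Rightarrow> 'a \<Rightarrow> real) \<Rightarrow> ('a \<Rightarrow> real) \<Rightarrow> 'a \<Rightarrow> nat \<Rightarrow> real" where
  "mP V w m x0 i = (\<Sum>y\<in>sphere_g V w x0 i. m y)"

end

theory Submission
  imports Defs
begin

locale wss_setup =
  fixes V :: "'a set" and w :: "'a \<Rightarrow> 'a \<Rightarrow> real" and m :: "'a \<Rightarrow> real" and x0 :: 'a
  assumes wg: "weighted_graph V w m"
    and lf: "locally_finite V w"
    and conn: "connected_graph V w"
    and x0V: "x0 \<in> V"
    and wss: "weakly_sph_sym V w m x0"
begin

abbreviation "d \<equiv> gdist w x0"
abbreviation "S \<equiv> sphere_g V w x0"
abbreviation "N \<equiv> nbrs V w"

lemma w_nonneg: "0 \<le> w x y" using wg unfolding weighted_graph_def by auto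
lemma w_sym: "w x y = w y x" using wg unfolding weighted_graph_def by auto
lemma w_V: "0 < w x y \<Longrightarrow> x \<in> V \<and> y \<in> V" using wg unfolding weighted_graph_def by auto
lemma m_pos: "x \<in> V \<Longrightarrow> 0 < m x" using wg unfolding weighted_graph_def by auto

lemma N_fin: "x \<in> V \<Longrightarrow> finite (N x)" using lf unfolding locally_finite_def by auto

lemma reach: "y \<in> V \<Longrightarrow> (x0, y) \<in> adj w ^^ d y"
proof -
  assume "y \<in> V"
  then have "(x0, y) \<in> (adj w)\<^sup>*" using conn x0V unfolding connected_graph_def by auto
  then obtain k where "(x0, y) \<in> adj w ^^ k" using rtrancl_imp_relpow by blast
  then show ?thesis unfolding gdist_def by (rule LeastI)
qed

lemma d_le: "(x0, y) \<in> adj w ^^ k \<Longrightarrow> d y \<le> k"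
  unfolding gdist_def by (rule Least_le)

lemma d_nbr: "y \<in> V \<Longrightarrow> 0 < w y z \<Longrightarrow> d z \<le> Suc (d y)"
proof -
  assume y: "y \<in> V" and wz: "0 < w y z"
  have "(x0, z) \<in> adj w ^^ Suc (d y)"
    by (rule relpow_Suc_I[OF reach[OF y]]) (use wz in \<open>simp add: adj_def\<close>)
  then show ?thesis by (rule d_le)
qed

lemma d_nbr2: "y \<in> V \<Longrightarrow> 0 < w y z \<Longrightarrow> d y \<le> Suc (d z)"
  using d_nbr[of z y] w_V[of y z] w_sym[of y z] by auto

lemma d0: "d y = 0 \<Longrightarrow> y \<in> V \<Longrightarrow> y = x0"
  using reach[of y] by simp

lemma pred_ex: "z \<in> V \<Longrightarrow> d z = Suc i \<Longrightarrow> \<exists>u\<in>V. d u = i \<and> 0 < w u z"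
proof -
  assume z: "z \<in> V" and dz: "d z = Suc i"
  have "(x0, z) \<in> adj w ^^ Suc i" using reach[OF z] dz by simp
  then obtain u where u1: "(x0, u) \<in> adj w ^^ i" and u2: "(u, z) \<in> adj w"
    by (rule relpow_Suc_E)
  have wu: "0 < w u z" using u2 by (simp add: adj_def)
  have uV: "u \<in> V" using w_V[OF wu] by simp
  have "d u \<le> i" using d_le[OF u1] .
  moreover have "d z \<le> Suc (d u)" using d_nbr[OF uV wu] .
  ultimately have "d u = i" using dz by simp
  then show ?thesis using uV wu by blast
qed

lemma S_fin: "finite (S i)"
proof (induction i)
  case 0
  have "S 0 \<subseteq> {x0}" unfolding sphere_g_def using d0 by auto
  then show ?case using finite_subset by blast
next
  case (Suc i)
  have "S (Suc i) \<subseteq> (\<Union>u\<in>S i. N u)"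
  proof
    fix z assume "z \<in> S (Suc i)"
    then have z: "z \<in> V" "d z = Suc i" unfolding sphere_g_def by auto
    then obtain u where "u \<in> V" "d u = i" "0 < w u z" using pred_ex by blast
    then show "z \<in> (\<Union>u\<in>S i. N u)" using z unfolding sphere_g_def nbrs_def by auto
  qed
  moreover have "finite (\<Union>u\<in>S i. N u)"
    using Suc N_fin unfolding sphere_g_def by auto
  ultimately show ?case using finite_subset by blast
qed

lemma S_ne_aux: "y \<in> V \<Longrightarrow> d y = k \<Longrightarrow> i \<le> k \<Longrightarrow> \<exists>z\<in>V. d z = i"
proof (induction k arbitrary: y)
  case 0
  then show ?case by auto
next
  case (Suc k)
  show ?case
  proof (cases "i = Suc k")
    case True then show ?thesis using Suc.prems by auto
  next
    case False
    obtain u where "u \<in> V" "d u = k" using pred_ex Suc.prems by blast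
    then show ?thesis using Suc.IH False Suc.prems(3) by auto
  qed
qed

lemma VP_iff: "i \<in> VP V w x0 \<longleftrightarrow> (\<exists>z\<in>V. d z = i)"
  unfolding VP_def using S_ne_aux by auto

lemma mP_pos: "x \<in> V \<Longrightarrow> 0 < mP V w m x0 (d x)"
  unfolding mP_def
proof (rule sum_pos)
  assume "x \<in> V"
  then show "finite (S (d x))" "S (d x) \<noteq> {}" using S_fin unfolding sphere_g_def by auto
  show "\<And>i. i \<in> S (d x) \<Longrightarrow> 0 < m i" using m_pos unfolding sphere_g_def by auto
qed

lemma wP_nonneg: "0 \<le> wP V w x0 i j"
  unfolding wP_def by (auto intro!: sum_nonneg w_nonneg)

lemma wP_notVP: "j \<notin> VP V w x0 \<Longrightarrow> wP V w x0 i j = 0"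
proof -
  assume "j \<notin> VP V w x0"
  then have "S j = {}" using VP_iff[of j] unfolding sphere_g_def by auto
  then show ?thesis unfolding wP_def by simp
qed

lemma sum_S: "y \<in> V \<Longrightarrow> (\<Sum>z\<in>S j. w y z) = (\<Sum>z\<in>{z\<in>N y. d z = j}. w y z)"
proof -
  assume y: "y \<in> V"
  show ?thesis
  proof (rule sum.mono_neutral_right)
    show "finite (S j)" by (rule S_fin)
    show "{z\<in>N y. d z = j} \<subseteq> S j" unfolding nbrs_def sphere_g_def by auto
    show "\<forall>z\<in>S j - {z\<in>N y. d z = j}. w y z = 0"
      unfolding nbrs_def sphere_g_def using w_nonneg[of y] by (auto simp: less_le)
  qed
qed

lemma md_plus: "y \<in> V \<Longrightarrow> m y * d_plus V w m x0 y = (\<Sum>z\<in>{z\<in>N y. d z = Suc (d y)}. w y z)"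
proof -
  assume y: "y \<in> V"
  have e: "{z\<in>N y. d y < d z} = {z\<in>N y. d z = Suc (d y)}"
    using d_nbr[OF y] unfolding nbrs_def by force
  have "m y * d_plus V w m x0 y = (\<Sum>z\<in>{z\<in>N y. d z = Suc (d y)}. w z y)"
    unfolding d_plus_def e using m_pos[OF y] by (simp add: sum_distrib_left)
  then show ?thesis using w_sym by simp
qed

lemma md_minus: "y \<in> V \<Longrightarrow> d y = Suc k \<Longrightarrow> m y * d_minus V w m x0 y = (\<Sum>z\<in>{z\<in>N y. d z = k}. w y z)"
proof -
  assume y: "y \<in> V" and dy: "d y = Suc k"
  have e: "{z\<in>N y. d z < d y} = {z\<in>N y. d z = k}"
    using d_nbr2[OF y] dy unfolding nbrs_def by force
  have "m y * d_minus V w m x0 y = (\<Sum>z\<in>{z\<in>N y. d z = k}. w z y)"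
    unfolding d_minus_def e using m_pos[OF y] by (simp add: sum_distrib_left)
  then show ?thesis using w_sym by simp
qed

lemma dminus0: "y \<in> V \<Longrightarrow> d y = 0 \<Longrightarrow> d_minus V w m x0 y = 0"
  unfolding d_minus_def by simp

lemma wss': "y \<in> V \<Longrightarrow> x \<in> V \<Longrightarrow> d y = d x \<Longrightarrow>
   m y = m x \<and> d_minus V w m x0 y = d_minus V w m x0 x \<and> d_plus V w m x0 y = d_plus V w m x0 x"
  using wss unfolding weakly_sph_sym_def by blast

lemma wP_succ: "x \<in> V \<Longrightarrow> wP V w x0 (d x) (Suc (d x)) = mP V w m x0 (d x) * d_plus V w m x0 x"
proof -
  assume x: "x \<in> V"
  have "wP V w x0 (d x) (Suc (d x)) = (\<Sum>y\<in>S (d x). \<Sum>z\<in>S (Suc (d x)). w y z)"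
    unfolding wP_def by (simp add: sum.cartesian_product split_def)
  also have "\<dots> = (\<Sum>y\<in>S (d x). m y * d_plus V w m x0 x)"
  proof (rule sum.cong)
    fix y assume "y \<in> S (d x)"
    then have y: "y \<in> V" "d y = d x" unfolding sphere_g_def by auto
    show "(\<Sum>z\<in>S (Suc (d x)). w y z) = m y * d_plus V w m x0 x"
      using sum_S[OF y(1)] md_plus[OF y(1)] wss'[OF y(1) x y(2)] y(2) by simp
  qed simp
  also have "\<dots> = mP V w m x0 (d x) * d_plus V w m x0 x"
    unfolding mP_def by (simp add: sum_distrib_right)
  finally show ?thesis .
qed

lemma wP_pred: "x \<in> V \<Longrightarrow> d x = Suc k \<Longrightarrow> wP V w x0 (Suc k) k = mP V w m x0 (Suc k) * d_minus V w m x0 x"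
proof -
  assume x: "x \<in> V" and dx: "d x = Suc k"
  have "wP V w x0 (Suc k) k = (\<Sum>y\<in>S (Suc k). \<Sum>z\<in>S k. w y z)"
    unfolding wP_def by (simp add: sum.cartesian_product split_def)
  also have "\<dots> = (\<Sum>y\<in>S (Suc k). m y * d_minus V w m x0 x)"
  proof (rule sum.cong)
    fix y assume "y \<in> S (Suc k)"
    then have y: "y \<in> V" "d y = Suc k" unfolding sphere_g_def by auto
    show "(\<Sum>z\<in>S k. w y z) = m y * d_minus V w m x0 x"
      using sum_S[OF y(1)] md_minus[OF y] wss'[OF y(1) x] y(2) dx by simp
  qed simp
  also have "\<dots> = mP V w m x0 (Suc k) * d_minus V w m x0 x"
    unfolding mP_def by (simp add: sum_distrib_right)
  finally show ?thesis .
qed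

lemma nbrsP_sum: "(\<Sum>j\<in>nbrs (VP V w x0) (wP V w x0) i. wP V w x0 i j * h j)
   = (\<Sum>j\<in>{j. Suc j = i \<or> j = Suc i}. wP V w x0 i j * h j)"
proof (rule sum.mono_neutral_left)
  show "finite {j. Suc j = i \<or> j = Suc i}" by (rule finite_subset[of _ "{..Suc i}"]) auto
  show "nbrs (VP V w x0) (wP V w x0) i \<subseteq> {j. Suc j = i \<or> j = Suc i}"
    unfolding nbrs_def wP_def by (auto split: if_splits)
  show "\<forall>j\<in>{j. Suc j = i \<or> j = Suc i} - nbrs (VP V w x0) (wP V w x0) i. wP V w x0 i j * h j = 0"
    using wP_notVP wP_nonneg[of i] unfolding nbrs_def by (force simp: less_le)
qed

lemma lapP: assumes x: "x \<in> V"
  shows "laplacian (VP V w x0) (wP V w x0) (mP V w m x0) g (d x)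
    = d_minus V w m x0 x * (g (d x - 1) - g (d x)) + d_plus V w m x0 x * (g (Suc (d x)) - g (d x))"
proof (cases "d x")
  case 0
  have e: "{j. Suc j = 0 \<or> j = Suc 0} = {1}" by auto
  show ?thesis
    unfolding laplacian_def nbrsP_sum using wP_succ[OF x] mP_pos[OF x] dminus0[OF x] 0
    by (simp add: e)
next
  case (Suc k)
  have e: "{j. Suc j = Suc k \<or> j = Suc (Suc k)} = {k, Suc (Suc k)}" by auto
  have s: "(\<Sum>j\<in>{j. Suc j = Suc k \<or> j = Suc (Suc k)}. wP V w x0 (Suc k) j * (g j - g (Suc k)))
     = wP V w x0 (Suc k) k * (g k - g (Suc k)) + wP V w x0 (Suc k) (Suc (Suc k)) * (g (Suc (Suc k)) - g (Suc k))"
    unfolding e by simp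
  show ?thesis
    unfolding laplacian_def nbrsP_sum Suc s using wP_succ[OF x] wP_pred[OF x Suc] mP_pos[OF x] Suc
    by (simp add: field_simps)
qed

lemma lapV: assumes x: "x \<in> V" and G: "\<forall>y\<in>V. G y = g (d y)"
  shows "laplacian V w m G x
    = d_minus V w m x0 x * (g (d x - 1) - g (d x)) + d_plus V w m x0 x * (g (Suc (d x)) - g (d x))"
proof -
  let ?A = "{y\<in>N x. d y < d x}" and ?B = "{y\<in>N x. d y = d x}" and ?C = "{y\<in>N x. d x < d y}"
  have fin: "finite (N x)" using N_fin[OF x] .
  have NU: "N x = ?A \<union> (?B \<union> ?C)" by auto
  have s: "(\<Sum>y\<in>N x. w x y * (G y - G x)) = (\<Sum>y\<in>?A. w x y * (G y - G x)) +
     ((\<Sum>y\<in>?B. w x y * (G y - G x)) + (\<Sum>y\<in>?C. w x y * (G y - G x)))"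
    apply (subst NU)
    apply (subst sum.union_disjoint, use fin in auto)
    apply (subst sum.union_disjoint, use fin in auto)
    done
  have sA: "(\<Sum>y\<in>?A. w x y * (G y - G x)) = (\<Sum>y\<in>?A. w y x) * (g (d x - 1) - g (d x))"
    unfolding sum_distrib_right
  proof (rule sum.cong)
    fix y assume "y \<in> ?A"
    then have "y \<in> V" "d y < d x" "0 < w x y" unfolding nbrs_def by auto
    moreover then have "d x \<le> Suc (d y)" using d_nbr2[OF x] by simp
    ultimately have "d y = d x - 1" by linarith
    then show "w x y * (G y - G x) = w y x * (g (d x - 1) - g (d x))"
      using G x w_sym[of x y] \<open>y \<in> V\<close> by simp
  qed simp
  have sB: "(\<Sum>y\<in>?B. w x y * (G y - G x)) = 0"
    by (rule sum.neutral) (use G x in \<open>auto simp: nbrs_def\<close>)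
  have sC: "(\<Sum>y\<in>?C. w x y * (G y - G x)) = (\<Sum>y\<in>?C. w y x) * (g (Suc (d x)) - g (d x))"
    unfolding sum_distrib_right
  proof (rule sum.cong)
    fix y assume "y \<in> ?C"
    then have "y \<in> V" "d x < d y" "0 < w x y" unfolding nbrs_def by auto
    moreover then have "d y \<le> Suc (d x)" using d_nbr[OF x] by simp
    ultimately have "d y = Suc (d x)" by linarith
    then show "w x y * (G y - G x) = w y x * (g (Suc (d x)) - g (d x))"
      using G x w_sym[of x y] \<open>y \<in> V\<close> by simp
  qed simp
  have dm: "d_minus V w m x0 x = (\<Sum>y\<in>?A. w y x) / m x"
    unfolding d_minus_def by (simp add: sum_divide_distrib)
  have dp: "d_plus V w m x0 x = (\<Sum>y\<in>?C. w y x) / m x"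
    unfolding d_plus_def by (simp add: sum_divide_distrib)
  show ?thesis unfolding laplacian_def s sA sB sC dm dp using m_pos[OF x]
    by (simp add: field_simps)
qed

lemma lap_eq: assumes x: "x \<in> V" and G: "\<forall>y\<in>V. G y = g (d y)"
  shows "laplacian V w m G x = laplacian (VP V w x0) (wP V w x0) (mP V w m x0) g (d x)"
  using lapV[OF x G] lapP[OF x] by simp


abbreviation "LP \<equiv> laplacian (VP V w x0) (wP V w x0) (mP V w m x0)"
abbreviation "GP \<equiv> Gam (VP V w x0) (wP V w x0) (mP V w m x0)"
abbreviation "G2P \<equiv> Gam2 (VP V w x0) (wP V w x0) (mP V w m x0)"

lemma Gam_eq: assumes x: "x \<in> V" and F: "\<forall>y\<in>V. F y = f (d y)" and G: "\<forall>y\<in>V. G y = g (d y)"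
  shows "Gam V w m F G x = GP f g (d x)"
proof -
  have FG: "\<forall>y\<in>V. F y * G y = f (d y) * g (d y)" using F G by simp
  show ?thesis unfolding Gam_def
    using lap_eq[OF x FG] lap_eq[OF x F] lap_eq[OF x G] F G x by simp
qed

lemma Gam2_eq: assumes x: "x \<in> V"
  shows "Gam2 V w m (\<lambda>y. f (d y)) (\<lambda>y. f (d y)) x = G2P f f (d x)"
proof -
  let ?F = "\<lambda>y. f (d y)"
  have F: "\<forall>y\<in>V. ?F y = f (d y)" by simp
  have GF: "\<forall>y\<in>V. Gam V w m ?F ?F y = GP f f (d y)" using Gam_eq[OF _ F F] by blast
  have LF: "\<forall>y\<in>V. laplacian V w m ?F y = LP f (d y)" using lap_eq[OF _ F] by blast
  show ?thesis unfolding Gam2_def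
    using lap_eq[OF x GF] Gam_eq[OF x F LF] by simp
qed

end

theorem corollary4:
  fixes V :: "'a set" and w :: "'a \<Rightarrow> 'a \<Rightarrow> real" and m :: "'a \<Rightarrow> real"
    and x0 :: 'a and K :: real and n :: ereal
  assumes "weighted_graph V w m"
    and "locally_finite V w"
    and "connected_graph V w"
    and "x0 \<in> V"
    and "weakly_sph_sym V w m x0"
    and "0 < n"
    and "CD V w m K n"
  shows "CD (VP V w x0) (wP V w x0) (mP V w m x0) K n"
proof -
  interpret wss_setup V w m x0 using assms by unfold_locales
  show ?thesis unfolding CD_def
  proof (intro allI impI)
    fix f :: "nat \<Rightarrow> real" and i assume "i \<in> VP V w x0"
    then obtain x where x: "x \<in> V" "gdist w x0 x = i" using VP_iff by blast
    let ?F = "\<lambda>y. f (gdist w x0 y)"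
    have F: "\<forall>y\<in>V. ?F y = f (gdist w x0 y)" by simp
    have "Gam2 V w m ?F ?F x \<ge> inv_dim n * (laplacian V w m ?F x)\<^sup>2 + K * Gam V w m ?F ?F x"
      using assms(7) x unfolding CD_def by blast
    then show "G2P f f i \<ge> inv_dim n * (LP f i)\<^sup>2 + K * GP f f i"
      using Gam2_eq[OF x(1)] lap_eq[OF x(1) F] Gam_eq[OF x(1) F F] x(2) by simp
  qed
qed

end
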